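(* Let $q$ be a prime power, let $C$ be an $[n,k,d]_q$ Griesmer optimal linear code, and let $k_1=\min\{\Gamma_q(n,k,d),k-1\}$. Then $C$ has a chain of linear subcodes $C_1\subset C_2\subset\cdots\subset C_{k_1}\subset C$ such that, for each $1\le i\le k_1$, $C_i$ has dimension $i$ and effective length $n(C_i)=g_q(i,d)$.
   Context: An $[n,k,d]_q$ linear code is a $k$-dimensional subspace of $\mathbb{F}_q^n$ with minimum nonzero Hamming weight $d$. The support of a code $D$ is the set of coordinates on which some codeword of $D$ is nonzero, and its effective length $n(D)$ is the size of this set. Let $g_q(k,d)=\sum_{i=0}^{k-1}\lceil d/q^i\rceil$. $C$ is Griesmer optimal if $n<g_q(k,d+1)$. For a Griesmer optimal $[n,k,d]_q$ code, $\Gamma_q(n,k,d)=k$ if $n=g_q(k,d)$; otherwise $\Gamma_q(n,k,d)$ is the smallest non-negative integer $k_1$ such that $n-g_q(k_1,d)\ge g_q(k-k_1,\lceil d/q^{k_1}\rceil+1)$ (with $g_q(0,\cdot)=0$). *)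

theory Defs
  imports Main "HOL.Vector_Spaces" "HOL-Library.Function_Algebras" "HOL-Library.Cardinality"
begin

text \<open>Vectors of F_q^n are represented as functions nat => 'a vanishing from index n on.
  The field F_q is an arbitrary finite field type 'a, with q = CARD('a).\<close>

definition vscale :: "'a::field \<Rightarrow> (nat \<Rightarrow> 'a) \<Rightarrow> (nat \<Rightarrow> 'a)" where
  "vscale c v = (\<lambda>i. c * v i)"

interpretation fvs: Vector_Spaces.vector_space "vscale :: 'a::field \<Rightarrow> (nat \<Rightarrow> 'a) \<Rightarrow> (nat \<Rightarrow> 'a)"
  by unfold_locales (auto simp: vscale_def fun_eq_iff algebra_simps)

definition vecs :: "nat \<Rightarrow> (nat \<Rightarrow> 'a::zero) set" where
  "vecs n = {v. \<forall>i\<ge>n. v i = 0}"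

definition hwt :: "nat \<Rightarrow> (nat \<Rightarrow> 'a::zero) \<Rightarrow> nat" where
  "hwt n v = card {i. i < n \<and> v i \<noteq> 0}"

definition linear_code :: "nat \<Rightarrow> nat \<Rightarrow> nat \<Rightarrow> (nat \<Rightarrow> 'a::{finite,field}) set \<Rightarrow> bool" where
  "linear_code n k d C \<longleftrightarrow> fvs.subspace C \<and> C \<subseteq> vecs n \<and> fvs.dim C = k \<and>
     (\<exists>v\<in>C. v \<noteq> 0 \<and> hwt n v = d) \<and> (\<forall>v\<in>C. v \<noteq> 0 \<longrightarrow> d \<le> hwt n v)"

definition code_support :: "(nat \<Rightarrow> 'a::zero) set \<Rightarrow> nat set" where
  "code_support D = {i. \<exists>v\<in>D. v i \<noteq> 0}"

definition eff_length :: "(nat \<Rightarrow> 'a::zero) set \<Rightarrow> nat" where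
  "eff_length D = card (code_support D)"

definition ceil_div :: "nat \<Rightarrow> nat \<Rightarrow> nat" where
  "ceil_div a b = (a + b - 1) div b"

definition griesmer :: "nat \<Rightarrow> nat \<Rightarrow> nat \<Rightarrow> nat" where
  "griesmer q k d = (\<Sum>i<k. ceil_div d (q ^ i))"

definition griesmer_optimal :: "nat \<Rightarrow> nat \<Rightarrow> nat \<Rightarrow> nat \<Rightarrow> bool" where
  "griesmer_optimal q n k d \<longleftrightarrow> n < griesmer q k (d + 1)"

text \<open>Gamma_q(n,k,d). The condition n - g_q(k1,d) >= g_q(k-k1, ...) is written additively
  to avoid truncated subtraction.\<close>
definition Gamma :: "nat \<Rightarrow> nat \<Rightarrow> nat \<Rightarrow> nat \<Rightarrow> nat" where
  "Gamma q n k d = (if n = griesmer q k d then k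
     else (LEAST k1. griesmer q k1 d + griesmer q (k - k1) (ceil_div d (q ^ k1) + 1) \<le> n))"

end

theory Submission
  imports Defs
begin

lemma cd_le: "0 < b \<Longrightarrow> ceil_div a b \<le> y \<longleftrightarrow> a \<le> b * y"
proof -
  assume b: "0 < b"
  have "(a + b - 1) div b \<le> y \<longleftrightarrow> a + b - 1 < b * Suc y"
    using b by (metis div_less_iff_less_mult mult.commute less_Suc_eq_le)
  also have "\<dots> \<longleftrightarrow> a \<le> b * y" using b by auto
  finally show ?thesis unfolding ceil_div_def .
qed

lemma cd_cd: assumes "0 < b" "0 < c" shows "ceil_div (ceil_div a b) c = ceil_div a (b * c)"
proof -
  have "ceil_div (ceil_div a b) c \<le> y \<longleftrightarrow> ceil_div a (b * c) \<le> y" for y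
    using assms by (simp add: cd_le mult.assoc)
  then show ?thesis by (meson order_antisym order_refl)
qed

lemma cd_1[simp]: "ceil_div a (Suc 0) = a" by (simp add: ceil_div_def)

lemma cd_0: "0 < b \<Longrightarrow> ceil_div 0 b = 0" by (simp add: ceil_div_def)

lemma cd_mono: "a \<le> a' \<Longrightarrow> ceil_div a b \<le> ceil_div a' b"
  unfolding ceil_div_def by (simp add: div_le_mono)

lemma g_mono: "d \<le> d' \<Longrightarrow> griesmer q k d \<le> griesmer q k d'"
  unfolding griesmer_def by (intro sum_mono cd_mono)

lemma g_0: "0 < q \<Longrightarrow> griesmer q k 0 = 0"
  unfolding griesmer_def by (simp add: cd_0)

lemma g_Suc: assumes "0 < q" shows "griesmer q (Suc k) d = d + griesmer q k (ceil_div d q)"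
proof -
  have "griesmer q (Suc k) d = ceil_div d (q^0) + (\<Sum>i<k. ceil_div d (q ^ Suc i))"
    unfolding griesmer_def by (rule sum.lessThan_Suc_shift)
  also have "(\<Sum>i<k. ceil_div d (q ^ Suc i)) = griesmer q k (ceil_div d q)"
    unfolding griesmer_def using assms by (intro sum.cong) (auto simp: cd_cd)
  finally show ?thesis by simp
qed

lemma g_Suc2: "griesmer q (Suc k) d = griesmer q k d + ceil_div d (q ^ k)"
  unfolding griesmer_def by simp

lemma g_split: assumes "0 < q" shows "griesmer q (i + m) d = griesmer q i d + griesmer q m (ceil_div d (q ^ i))"
  using assms
proof (induction i arbitrary: d)
  case 0 then show ?case using cd_1 by (simp add: griesmer_def del: cd_1)
next
  case (Suc i)
  have "griesmer q (Suc i + m) d = d + griesmer q (i + m) (ceil_div d q)"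
    using Suc.prems g_Suc by simp
  also have "\<dots> = d + griesmer q i (ceil_div d q) + griesmer q m (ceil_div (ceil_div d q) (q ^ i))"
    using Suc by simp
  also have "ceil_div (ceil_div d q) (q ^ i) = ceil_div d (q ^ Suc i)"
    using Suc.prems by (simp add: cd_cd)
  finally show ?case using g_Suc[OF Suc.prems] by simp
qed

lemma g_strict: assumes "0 < q" "0 < m" shows "griesmer q m t < griesmer q m (t + 1)"
proof -
  obtain m' where m: "m = Suc m'" using assms by (cases m) auto
  show ?thesis unfolding m g_Suc[OF assms(1)]
    using g_mono[of "ceil_div t q" "ceil_div (t+1) q" q m'] cd_mono[of t "t+1" q] by simp
qed

lemma finite_vecs: "finite (vecs n :: (nat \<Rightarrow> 'a::{finite,zero}) set)"
proof -
  have "inj_on (\<lambda>v. map v [0..<n]) (vecs n :: (nat \<Rightarrow> 'a) set)"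
  proof (rule inj_onI)
    fix x y :: "nat \<Rightarrow> 'a" assume "x \<in> vecs n" "y \<in> vecs n" "map x [0..<n] = map y [0..<n]"
    then show "x = y" unfolding vecs_def fun_eq_iff
      by (metis (mono_tags, lifting) atLeastLessThan_iff map_eq_conv mem_Collect_eq not_le set_upt zero_le)
  qed
  moreover have "(\<lambda>v. map v [0..<n]) ` (vecs n :: (nat \<Rightarrow> 'a) set) \<subseteq> {xs. set xs \<subseteq> UNIV \<and> length xs = n}"
    by auto
  moreover have "finite {xs :: 'a list. set xs \<subseteq> UNIV \<and> length xs = n}"
    by (rule finite_lists_length_eq) simp
  ultimately show ?thesis by (meson finite_imageD finite_subset)
qed

lemma span_disj:
  fixes A E :: "(nat \<Rightarrow> 'a::field) set"
  assumes "finite E" "fvs.independent (A \<union> E)" "A \<inter> E = {}"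
  shows "x \<in> fvs.span A \<Longrightarrow> x \<in> fvs.span E \<Longrightarrow> x = 0"
  using assms
proof (induction E arbitrary: x rule: finite_induct)
  case empty then show ?case by simp
next
  case (insert e E)
  from insert.prems(2) obtain k where k: "x - vscale k e \<in> fvs.span E"
    using fvs.span_breakdown_eq by blast
  have indE: "fvs.independent (A \<union> E)"
    using insert.prems(3) by (rule fvs.independent_mono) auto
  show ?case
  proof (cases "k = 0")
    case True
    then have "x \<in> fvs.span E" using k by (simp only: fvs.scale_zero_left diff_zero)
    then show ?thesis using insert.IH[OF insert.prems(1) _ indE] insert.prems(4) by auto
  next
    case False
    have "x \<in> fvs.span (A \<union> E)" using insert.prems(1) fvs.span_mono[of A "A \<union> E"] by auto
    moreover have "x - vscale k e \<in> fvs.span (A \<union> E)" using k fvs.span_mono[of E "A \<union> E"] by auto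
    ultimately have "x - (x - vscale k e) \<in> fvs.span (A \<union> E)" by (rule fvs.span_diff)
    then have "vscale (inverse k) (x - (x - vscale k e)) \<in> fvs.span (A \<union> E)" by (rule fvs.span_scale)
    moreover have "vscale (inverse k) (x - (x - vscale k e)) = e"
      using False by (simp add: vscale_def fun_eq_iff)
    ultimately have "e \<in> fvs.span (A \<union> E)" by simp
    moreover have "e \<notin> A \<union> E" using insert by auto
    moreover have "fvs.independent (insert e (A \<union> E))" using insert.prems(3) by simp
    ultimately have False using fvs.independent_insert[of e "A \<union> E"] by simp
    then show ?thesis ..
  qed
qed

lemma complement:
  fixes C D :: "(nat \<Rightarrow> 'a::field) set"
  assumes "finite C" "fvs.subspace C" "fvs.subspace D" "D \<subseteq> C"
  shows "\<exists>C'. fvs.subspace C' \<and> C' \<subseteq> C \<and> fvs.dim C' = fvs.dim C - fvs.dim D \<and> (\<forall>u\<in>C'. u \<in> D \<longrightarrow> u = 0)"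
proof -
  obtain BD where BD: "BD \<subseteq> D" "fvs.independent BD" "D \<subseteq> fvs.span BD" "card BD = fvs.dim D"
    by (rule fvs.basis_exists)
  obtain B where B: "BD \<subseteq> B" "B \<subseteq> C" "fvs.independent B" "C \<subseteq> fvs.span B"
    using fvs.maximal_independent_subset_extend[of BD C] BD assms(4) by blast
  have cB: "card B = fvs.dim C" using B fvs.basis_card_eq_dim by blast
  have fB: "finite B" using B(2) assms(1) finite_subset by blast
  have fBD: "finite BD" using B(1) fB finite_subset by blast
  define C' where "C' = fvs.span (B - BD)"
  have "fvs.subspace C'" unfolding C'_def by simp
  moreover have "C' \<subseteq> C" unfolding C'_def using B(2) assms(2) fvs.span_minimal by blast
  moreover have "fvs.dim C' = fvs.dim C - fvs.dim D"
  proof -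
    have "fvs.independent (B - BD)" using B(3) fvs.independent_mono by blast
    then have "fvs.dim C' = card (B - BD)" unfolding C'_def by (rule fvs.dim_span_eq_card_independent)
    also have "\<dots> = card B - card BD" using B(1) fBD by (simp add: card_Diff_subset)
    finally show ?thesis using cB BD(4) by simp
  qed
  moreover have "\<forall>u\<in>C'. u \<in> D \<longrightarrow> u = 0"
  proof (intro ballI impI)
    fix u assume u: "u \<in> C'" "u \<in> D"
    have "BD \<union> (B - BD) = B" using B(1) by auto
    then show "u = 0"
      using span_disj[of "B - BD" BD u] fB B(3) u BD(3) unfolding C'_def by auto
  qed
  ultimately show ?thesis by blast
qed

lemma dim_insert_sub:
  fixes D :: "(nat \<Rightarrow> 'a::field) set"
  assumes "finite D" "fvs.subspace D" "c \<notin> D"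
  shows "fvs.dim (fvs.span (insert c D)) = Suc (fvs.dim D)"
proof -
  obtain BD where BD: "BD \<subseteq> D" "fvs.independent BD" "D \<subseteq> fvs.span BD" "card BD = fvs.dim D"
    by (rule fvs.basis_exists)
  have sp: "fvs.span BD = D" using BD assms(2) fvs.span_subspace by blast
  have ind: "fvs.independent (insert c BD)" using fvs.independent_insertI[of c BD] sp assms(3) BD(2) by simp
  have "fvs.span (insert c BD) = fvs.span (fvs.span (insert c D))"
    unfolding fvs.span_span fvs.span_eq
    using BD(1) sp fvs.span_superset fvs.span_mono[of BD "insert c BD"]
    by (auto intro: fvs.span_base)
  then have "fvs.dim (fvs.span (insert c D)) = card (insert c BD)"
    using fvs.dim_eq_card ind by blast
  also have "\<dots> = Suc (card BD)"
    using BD(1) assms(1) assms(3) finite_subset by (subst card_insert_disjoint) auto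
  finally show ?thesis using BD(4) by simp
qed

lemma supp_span_insert:
  fixes D :: "(nat \<Rightarrow> 'a::field) set"
  assumes "fvs.subspace D"
  shows "code_support (fvs.span (insert c D)) = code_support D \<union> {j. c j \<noteq> 0}"
proof
  show "code_support (fvs.span (insert c D)) \<subseteq> code_support D \<union> {j. c j \<noteq> 0}"
  proof
    fix j assume "j \<in> code_support (fvs.span (insert c D))"
    then obtain x where x: "x \<in> fvs.span (insert c D)" "x j \<noteq> 0" unfolding code_support_def by auto
    then obtain k where "x - vscale k c \<in> fvs.span D" using fvs.span_breakdown_eq by blast
    moreover have "fvs.span D = D" using assms by (rule fvs.span_eq_iff[THEN iffD2])
    ultimately have "x - vscale k c \<in> D" by simp
    moreover have "x j = (x - vscale k c) j + k * c j" by (simp add: vscale_def)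
    ultimately show "j \<in> code_support D \<union> {j. c j \<noteq> 0}"
      using x(2) unfolding code_support_def by (cases "c j = 0") force+
  qed
next
  show "code_support D \<union> {j. c j \<noteq> 0} \<subseteq> code_support (fvs.span (insert c D))"
    unfolding code_support_def using fvs.span_base[of c "insert c D"] fvs.span_superset[of "insert c D"]
    by blast
qed

definition wt :: "nat set \<Rightarrow> (nat \<Rightarrow> 'a::zero) \<Rightarrow> nat" where
  "wt T v = card {j\<in>T. v j \<noteq> 0}"

definition supT :: "nat set \<Rightarrow> (nat \<Rightarrow> 'a::zero) set \<Rightarrow> nat set" where
  "supT T C = {j\<in>T. \<exists>v\<in>C. v j \<noteq> 0}"

lemma card_nz: "card {\<alpha>::'a::{finite,field}. a + \<alpha> * b \<noteq> 0} =
   (if b \<noteq> 0 then CARD('a) - 1 else if a \<noteq> 0 then CARD('a) else 0)"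
proof (cases "b = 0")
  case False
  have "{\<alpha>::'a. a + \<alpha> * b \<noteq> 0} = UNIV - {- a / b}"
    using False by (auto simp: field_simps) (metis add.commute add_eq_0_iff)
  then show ?thesis using False by (simp add: card_Diff_singleton)
qed simp

lemma averaging:
  fixes u v :: "nat \<Rightarrow> 'a::{finite,field}"
  assumes "finite T"
  shows "(\<Sum>\<alpha>\<in>UNIV. wt T (u + vscale \<alpha> v)) =
         (CARD('a) - 1) * wt T v + CARD('a) * wt {j\<in>T. v j = 0} u"
proof -
  have "(\<Sum>\<alpha>\<in>UNIV. wt T (u + vscale \<alpha> v)) =
        (\<Sum>\<alpha>\<in>(UNIV::'a set). \<Sum>j\<in>T. if u j + \<alpha> * v j \<noteq> 0 then 1 else 0)"
    unfolding wt_def using assms by (simp add: vscale_def sum.If_cases Int_def)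
  also have "\<dots> = (\<Sum>j\<in>T. \<Sum>\<alpha>\<in>(UNIV::'a set). if u j + \<alpha> * v j \<noteq> 0 then 1 else 0)"
    by (rule sum.swap)
  also have "\<dots> = (\<Sum>j\<in>T. card {\<alpha>::'a. u j + \<alpha> * v j \<noteq> 0})"
    by (simp add: sum.If_cases Int_def)
  also have "\<dots> = (\<Sum>j\<in>T. (if v j \<noteq> 0 then CARD('a) - 1 else if u j \<noteq> 0 then CARD('a) else 0))"
    by (simp add: card_nz)
  also have "\<dots> = (\<Sum>j\<in>{j\<in>T. v j \<noteq> 0}. CARD('a) - 1) + (\<Sum>j\<in>{j\<in>T. v j = 0}. if u j \<noteq> 0 then CARD('a) else 0)"
    using assms by (simp add: sum.If_cases Int_def)
  also have "\<dots> = (CARD('a) - 1) * wt T v + CARD('a) * wt {j\<in>T. v j = 0} u"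
    using assms by (simp add: wt_def sum.If_cases Int_def)
  finally show ?thesis .
qed

lemma griesmer_gen_k:
  fixes C :: "(nat \<Rightarrow> 'a::{finite,field}) set"
  assumes "fvs.dim C = k" "finite T" "finite C" "fvs.subspace C" "\<forall>v\<in>C. v \<noteq> 0 \<longrightarrow> d \<le> wt T v"
  shows "griesmer CARD('a) k d \<le> card (supT T C)"
  using assms
proof (induction k arbitrary: C T d)
  case 0 then show ?case by (simp add: griesmer_def)
next
  case (Suc k)
  define q where "q = CARD('a)"
  have q0: "0 < q" unfolding q_def by simp
  show ?case
  proof (cases "d = 0")
    case True then show ?thesis using g_0[OF q0] q_def by simp
  next
    case False
    define N where "N = C - {0}"
    have "\<not> C \<subseteq> {0}"
    proof
      assume "C \<subseteq> {0}"
      then have "fvs.dim C \<le> card ({}::(nat \<Rightarrow> 'a) set)" by (intro fvs.dim_le_card) auto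
      then show False using Suc.prems(1) by simp
    qed
    then have Nne: "N \<noteq> {}" unfolding N_def by auto
    have fN: "finite N" unfolding N_def using Suc.prems(3) by simp
    define d0 where "d0 = Min (wt T ` N)"
    have "d0 \<in> wt T ` N" unfolding d0_def using Nne fN by simp
    then obtain v where v: "v \<in> C" "v \<noteq> 0" "wt T v = d0" unfolding N_def by auto
    have d0min: "\<And>u. u \<in> C \<Longrightarrow> u \<noteq> 0 \<Longrightarrow> d0 \<le> wt T u"
      unfolding d0_def N_def using fN N_def by (intro Min_le) auto
    have dd0: "d \<le> d0" using Suc.prems(5) v by metis
    have spv: "fvs.span {v} \<subseteq> C" using v(1) Suc.prems(4) fvs.span_minimal by blast
    have dimv: "fvs.dim (fvs.span {v}) = 1"
      using fvs.dim_span_eq_card_independent[of "{v}"] v(2) by simp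
    obtain C' where C': "fvs.subspace C'" "C' \<subseteq> C" "fvs.dim C' = fvs.dim C - fvs.dim (fvs.span {v})"
      "\<forall>u\<in>C'. u \<in> fvs.span {v} \<longrightarrow> u = 0"
      using complement[OF Suc.prems(3) Suc.prems(4) _ spv] by auto
    have dC': "fvs.dim C' = k" using C'(3) dimv Suc.prems(1) by simp
    define T' where "T' = {j\<in>T. v j = 0}"
    define W where "W = {j\<in>T. v j \<noteq> 0}"
    have resid: "ceil_div d0 q \<le> wt T' u" if u: "u \<in> C'" "u \<noteq> 0" for u
    proof -
      have nz: "u + vscale \<alpha> v \<noteq> 0" for \<alpha>
      proof
        assume "u + vscale \<alpha> v = 0"
        then have "u = vscale (- \<alpha>) v" by (simp add: vscale_def fun_eq_iff add_eq_0_iff)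
        moreover have "vscale (- \<alpha>) v \<in> fvs.span {v}" by (intro fvs.span_scale fvs.span_base) simp
        ultimately have "u \<in> fvs.span {v}" by simp
        then show False using u C'(4) by blast
      qed
      have inC: "u + vscale \<alpha> v \<in> C" for \<alpha>
        using u C'(2) v(1) Suc.prems(4) fvs.subspace_add fvs.subspace_scale by blast
      have "(\<Sum>\<alpha>\<in>(UNIV::'a set). d0) \<le> (\<Sum>\<alpha>\<in>UNIV. wt T (u + vscale \<alpha> v))"
        by (intro sum_mono d0min inC nz)
      also have "\<dots> = (q - 1) * d0 + q * wt T' u"
        unfolding T'_def q_def using averaging[OF Suc.prems(2), of u v] v(3) by simp
      finally have "q * d0 \<le> (q - 1) * d0 + q * wt T' u" unfolding q_def by simp
      moreover have "(q - 1) * d0 + d0 = q * d0" using q0 by (cases q) auto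
      ultimately have "d0 \<le> q * wt T' u" by linarith
      then show ?thesis using cd_le[OF q0] by blast
    qed
    have fT': "finite T'" unfolding T'_def using Suc.prems(2) by simp
    have fC': "finite C'" using C'(2) Suc.prems(3) finite_subset by blast
    have "\<forall>u\<in>C'. u \<noteq> 0 \<longrightarrow> ceil_div d0 q \<le> wt T' u" using resid by blast
    then have IH: "griesmer q k (ceil_div d0 q) \<le> card (supT T' C')"
      unfolding q_def by (rule Suc.IH[OF dC' fT' fC' C'(1)])
    have sub: "W \<union> supT T' C' \<subseteq> supT T C"
      unfolding W_def T'_def supT_def using v(1) C'(2) by auto
    have disj: "W \<inter> supT T' C' = {}" unfolding W_def T'_def supT_def by auto
    have fin: "finite (supT T C)" unfolding supT_def using Suc.prems(2) by simp
    have cW: "card W = d0" unfolding W_def using v(3) wt_def by metis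
    have "card W + card (supT T' C') \<le> card (supT T C)"
      using card_mono[OF fin sub] card_Un_disjoint[OF _ _ disj] fin sub
      by (metis finite_Un finite_subset)
    have "griesmer q (Suc k) d \<le> griesmer q (Suc k) d0" by (rule g_mono[OF dd0])
    also have "\<dots> = d0 + griesmer q k (ceil_div d0 q)" by (rule g_Suc[OF q0])
    also have "\<dots> \<le> card (supT T C)" using IH cW \<open>card W + card (supT T' C') \<le> card (supT T C)\<close> by simp
    finally show ?thesis unfolding q_def .
  qed
qed

lemma hwt_wt: "hwt n v = wt {..<n} v"
  unfolding hwt_def wt_def by (simp add: lessThan_def)

lemma vecs_lt: "v \<in> vecs n \<Longrightarrow> v x \<noteq> 0 \<Longrightarrow> x < n"
proof (rule ccontr)
  assume "v \<in> vecs n" "v x \<noteq> 0" "\<not> x < n"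
  then show False unfolding vecs_def by simp
qed

lemma supT_cs: "X \<subseteq> vecs n \<Longrightarrow> supT {..<n} X = code_support X"
proof -
  assume X: "X \<subseteq> vecs n"
  have "j < n" if "v \<in> X" "v j \<noteq> 0" for v j using vecs_lt[of v n j] X that by (simp add: subset_iff)
  then show ?thesis unfolding supT_def code_support_def by auto
qed

lemma step:
  fixes C D :: "(nat \<Rightarrow> 'a::{finite,field}) set"
  assumes C: "fvs.subspace C" "C \<subseteq> vecs n" "fvs.dim C = k"
   and mind: "\<forall>v\<in>C. v \<noteq> 0 \<longrightarrow> d \<le> hwt n v"
   and D: "fvs.subspace D" "D \<subseteq> C" "fvs.dim D = i" "eff_length D = griesmer CARD('a) i d"
   and ik: "i < k"
   and nG: "n < griesmer CARD('a) i d + griesmer CARD('a) (k - i) (ceil_div d (CARD('a)^i) + 1)"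
  shows "\<exists>c\<in>C. c \<notin> D \<and> eff_length (fvs.span (insert c D)) = griesmer CARD('a) (Suc i) d"
proof -
  define q where "q = CARD('a)"
  have q0: "0 < q" unfolding q_def by simp
  define S where "S = code_support D"
  define T' where "T' = {..<n} - S"
  define t where "t = ceil_div d (q^i)"
  have fC: "finite C" using C(2) finite_vecs finite_subset by blast
  have fD: "finite D" using D(2) fC finite_subset by blast
  have Ssub: "S \<subseteq> {..<n}"
  proof
    fix j assume "j \<in> S"
    then obtain v where "v \<in> D" "v j \<noteq> 0" unfolding S_def code_support_def by auto
    then show "j \<in> {..<n}" using vecs_lt[of v n j] D(2) C(2) by auto
  qed
  have cS: "card S = griesmer q i d" using D(4) unfolding S_def eff_length_def q_def .
  have cT': "card T' = n - griesmer q i d" unfolding T'_def using Ssub cS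
    by (simp add: card_Diff_subset finite_subset)
  have "\<exists>c\<in>C. c \<notin> D \<and> wt T' c \<le> t"
  proof (rule ccontr)
    assume "\<not> ?thesis"
    then have big: "\<And>c. c \<in> C \<Longrightarrow> c \<notin> D \<Longrightarrow> t + 1 \<le> wt T' c" by force
    obtain C' where C': "fvs.subspace C'" "C' \<subseteq> C" "fvs.dim C' = fvs.dim C - fvs.dim D"
      "\<forall>u\<in>C'. u \<in> D \<longrightarrow> u = 0"
      using complement[OF fC C(1) D(1) D(2)] by blast
    have fC': "finite C'" using C'(2) fC finite_subset by blast
    have "\<forall>u\<in>C'. u \<noteq> 0 \<longrightarrow> t + 1 \<le> wt T' u" using big C'(2,4) by blast
    then have "griesmer q (k - i) (t + 1) \<le> card (supT T' C')"
      using griesmer_gen_k[OF _ _ fC' C'(1)] C'(3) C(3) D(3) unfolding q_def T'_def by simp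
    also have "\<dots> \<le> card T'" unfolding supT_def T'_def by (intro card_mono) auto
    finally have "griesmer q (k - i) (t + 1) \<le> n - griesmer q i d" using cT' by simp
    moreover have "card S \<le> n" using card_mono[OF _ Ssub] by simp
    ultimately have "griesmer q i d + griesmer q (k - i) (t + 1) \<le> n" using cS by linarith
    then show False using nG unfolding q_def t_def by simp
  qed
  then obtain c where c: "c \<in> C" "c \<notin> D" "wt T' c \<le> t" by blast
  define E where "E = fvs.span (insert c D)"
  have Esub: "E \<subseteq> C" unfolding E_def using c(1) D(2) C(1) fvs.span_minimal by (metis insert_subset)
  have fE: "finite E" using Esub fC finite_subset by blast
  have dE: "fvs.dim E = Suc i" unfolding E_def using dim_insert_sub[OF fD D(1) c(2)] D(3) by simp
  have csE: "code_support E = S \<union> {j. c j \<noteq> 0}" unfolding E_def S_def by (rule supp_span_insert[OF D(1)])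
  have cvec: "c \<in> vecs n" using c(1) C(2) by blast
  have eqc: "{j. c j \<noteq> 0} - S = {j\<in>T'. c j \<noteq> 0}" unfolding T'_def using vecs_lt[OF cvec] by auto
  have fS: "finite S" using Ssub finite_subset by blast
  have fT'c: "finite {j\<in>T'. c j \<noteq> 0}" unfolding T'_def by simp
  have e1: "code_support E = S \<union> {j\<in>T'. c j \<noteq> 0}" unfolding csE eqc[symmetric] Un_Diff_cancel by (rule refl)
  have e2: "S \<inter> {j\<in>T'. c j \<noteq> 0} = {}" unfolding T'_def by blast
  have cE: "card (code_support E) = griesmer q i d + wt T' c"
    unfolding wt_def e1 card_Un_disjoint[OF fS fT'c e2] cS by (rule refl)
  have "\<forall>v\<in>E. v \<noteq> 0 \<longrightarrow> d \<le> wt {..<n} v"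
  proof (intro ballI impI)
    fix v assume v: "v \<in> E" "v \<noteq> 0"
    have "v \<in> C" using Esub v(1) by (rule subsetD)
    then have "d \<le> hwt n v" using mind v(2) by simp
    then show "d \<le> wt {..<n} v" by (simp only: hwt_wt)
  qed
  moreover have sE: "fvs.subspace E" unfolding E_def by (rule fvs.subspace_span)
  ultimately have "griesmer q (Suc i) d \<le> card (supT {..<n} E)"
    unfolding q_def using griesmer_gen_k[OF dE finite_lessThan fE sE] by blast
  also have "supT {..<n} E = code_support E" using Esub C(2) supT_cs by blast
  finally have ge: "griesmer q (Suc i) d \<le> griesmer q i d + wt T' c" using cE by simp
  have "griesmer q (Suc i) d = griesmer q i d + t" unfolding t_def by (rule g_Suc2)
  then have "eff_length E = griesmer q (Suc i) d" using ge c(3) cE unfolding eff_length_def by simp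
  then show ?thesis using c unfolding E_def q_def by blast
qed

lemma dim_zero_set: "fvs.dim ({0} :: (nat \<Rightarrow> 'a::field) set) = 0"
proof -
  have "fvs.dim ({0} :: (nat \<Rightarrow> 'a) set) \<le> card ({} :: (nat \<Rightarrow> 'a) set)"
    by (intro fvs.dim_le_card) auto
  then show ?thesis by simp
qed

lemma cs_zero: "code_support ({0} :: (nat \<Rightarrow> 'a::zero) set) = {}"
  unfolding code_support_def by (simp add: zero_fun_def)

theorem proposition2:
  fixes C :: "(nat \<Rightarrow> 'a::{finite,field}) set"
    and n k d k1 :: nat
  assumes "linear_code n k d C"
    and "griesmer_optimal CARD('a) n k d"
    and "k1 = min (Gamma CARD('a) n k d) (k - 1)"
  shows "\<exists>Cs :: nat \<Rightarrow> (nat \<Rightarrow> 'a) set.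
           (\<forall>i\<in>{1..k1}. fvs.subspace (Cs i) \<and> Cs i \<subset> C \<and> fvs.dim (Cs i) = i
                         \<and> eff_length (Cs i) = griesmer CARD('a) i d) \<and>
           (\<forall>i. 1 \<le> i \<and> i < k1 \<longrightarrow> Cs i \<subset> Cs (Suc i))"
proof -
  define q where "q = CARD('a)"
  have q0: "0 < q" unfolding q_def by simp
  have C: "fvs.subspace C" "C \<subseteq> vecs n" "fvs.dim C = k"
    using assms(1) unfolding linear_code_def by auto
  have mind: "\<forall>v\<in>C. v \<noteq> 0 \<longrightarrow> d \<le> hwt n v"
    using assms(1) unfolding linear_code_def by blast
  have fC: "finite C" using C(2) finite_vecs finite_subset by blast
  have gam: "n < griesmer q j d + griesmer q (k - j) (ceil_div d (q ^ j) + 1)" if j: "j < k1" for j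
  proof -
    have jG: "j < Gamma q n k d" and jk1: "j < k - 1" using j assms(3) unfolding q_def by auto
    then have jk: "j < k" by linarith
    show ?thesis
    proof (cases "n = griesmer q k d")
      case True
      have "griesmer q k d = griesmer q (j + (k - j)) d" using jk by simp
      also have "\<dots> = griesmer q j d + griesmer q (k - j) (ceil_div d (q ^ j))" by (rule g_split[OF q0])
      also have "\<dots> < griesmer q j d + griesmer q (k - j) (ceil_div d (q ^ j) + 1)"
        using g_strict[OF q0, of "k - j"] jk by simp
      finally show ?thesis using True by simp
    next
      case False
      then have "j < (LEAST k1. griesmer q k1 d + griesmer q (k - k1) (ceil_div d (q ^ k1) + 1) \<le> n)"
        using jG unfolding Gamma_def by simp
      then show ?thesis by (meson not_less_Least not_le)
    qed
  qed
  have chain: "\<exists>Cs. (\<forall>i\<le>j. fvs.subspace (Cs i) \<and> Cs i \<subseteq> C \<and> fvs.dim (Cs i) = i \<and>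
                        eff_length (Cs i) = griesmer q i d) \<and> (\<forall>i<j. Cs i \<subseteq> Cs (Suc i))"
    if "j \<le> k1" for j
    using that
  proof (induction j)
    case 0
    have "eff_length ({0} :: (nat \<Rightarrow> 'a) set) = griesmer q 0 d"
      unfolding eff_length_def cs_zero by (simp add: griesmer_def)
    then show ?case using fvs.subspace_0[OF C(1)] dim_zero_set
      by (intro exI[of _ "\<lambda>_. {0}"]) auto
  next
    case (Suc j)
    then obtain Cs where Cs: "\<forall>i\<le>j. fvs.subspace (Cs i) \<and> Cs i \<subseteq> C \<and> fvs.dim (Cs i) = i \<and>
                        eff_length (Cs i) = griesmer q i d" "\<forall>i<j. Cs i \<subseteq> Cs (Suc i)" by auto
    have jk1: "j < k1" using Suc.prems by simp
    have "j < k - 1" using jk1 assms(3) by simp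
    then have jk: "j < k" by linarith
    have D: "fvs.subspace (Cs j)" "Cs j \<subseteq> C" "fvs.dim (Cs j) = j" "eff_length (Cs j) = griesmer q j d"
      using Cs(1) by auto
    obtain c where c: "c \<in> C" "c \<notin> Cs j" "eff_length (fvs.span (insert c (Cs j))) = griesmer q (Suc j) d"
      using step[OF C mind D[unfolded q_def] jk gam[OF jk1, unfolded q_def]] unfolding q_def by blast
    define Cs' where "Cs' = Cs(Suc j := fvs.span (insert c (Cs j)))"
    have fD: "finite (Cs j)" using D(2) fC finite_subset by blast
    have new: "fvs.subspace (Cs' (Suc j)) \<and> Cs' (Suc j) \<subseteq> C \<and> fvs.dim (Cs' (Suc j)) = Suc j \<and>
                        eff_length (Cs' (Suc j)) = griesmer q (Suc j) d"
      unfolding Cs'_def using c D dim_insert_sub[OF fD D(1) c(2)] fvs.span_minimal[OF _ C(1), of "insert c (Cs j)"]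
      by auto
    have "\<forall>i\<le>Suc j. fvs.subspace (Cs' i) \<and> Cs' i \<subseteq> C \<and> fvs.dim (Cs' i) = i \<and>
                        eff_length (Cs' i) = griesmer q i d"
    proof (intro allI impI)
      fix i assume "i \<le> Suc j"
      then consider "i \<le> j" | "i = Suc j" by linarith
      then show "fvs.subspace (Cs' i) \<and> Cs' i \<subseteq> C \<and> fvs.dim (Cs' i) = i \<and>
                        eff_length (Cs' i) = griesmer q i d"
      proof cases
        case 1 then show ?thesis using Cs(1) unfolding Cs'_def by auto
      next
        case 2 then show ?thesis using new by simp
      qed
    qed
    moreover have "\<forall>i<Suc j. Cs' i \<subseteq> Cs' (Suc i)"
    proof (intro allI impI)
      fix i assume "i < Suc j"
      then consider "i < j" | "i = j" by linarith
      then show "Cs' i \<subseteq> Cs' (Suc i)"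
      proof cases
        case 1 then show ?thesis using Cs(2) unfolding Cs'_def by auto
      next
        case 2 then show ?thesis unfolding Cs'_def using fvs.span_superset[of "insert c (Cs j)"] by auto
      qed
    qed
    ultimately show ?case by blast
  qed
  obtain Cs where Cs: "\<forall>i\<le>k1. fvs.subspace (Cs i) \<and> Cs i \<subseteq> C \<and> fvs.dim (Cs i) = i \<and>
                        eff_length (Cs i) = griesmer q i d" "\<forall>i<k1. Cs i \<subseteq> Cs (Suc i)"
    using chain[OF order_refl] by blast
  have "\<forall>i\<in>{1..k1}. fvs.subspace (Cs i) \<and> Cs i \<subset> C \<and> fvs.dim (Cs i) = i
                         \<and> eff_length (Cs i) = griesmer CARD('a) i d"
  proof
    fix i assume i: "i \<in> {1..k1}"
    then have P: "fvs.subspace (Cs i) \<and> Cs i \<subseteq> C \<and> fvs.dim (Cs i) = i \<and>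
                        eff_length (Cs i) = griesmer q i d" using Cs(1) by auto
    have "i < k - 1 \<or> i = k - 1" using i assms(3) by auto
    moreover have "1 \<le> i" using i by simp
    ultimately have "i < k" by linarith
    then have "Cs i \<noteq> C" using P C(3) by auto
    then show "fvs.subspace (Cs i) \<and> Cs i \<subset> C \<and> fvs.dim (Cs i) = i
                         \<and> eff_length (Cs i) = griesmer CARD('a) i d" using P unfolding q_def by auto
  qed
  moreover have "\<forall>i. 1 \<le> i \<and> i < k1 \<longrightarrow> Cs i \<subset> Cs (Suc i)"
  proof (intro allI impI)
    fix i assume i: "1 \<le> i \<and> i < k1"
    then have "Cs i \<subseteq> Cs (Suc i)" "fvs.dim (Cs i) = i" "fvs.dim (Cs (Suc i)) = Suc i" using Cs by auto
    then show "Cs i \<subset> Cs (Suc i)" by auto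
  qed
  ultimately show ?thesis by blast
qed

end
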